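(* Let $n\in\mathbb{N}$ and $t\in\mathbb{R}\setminus\{0\}$. Define $\phi_n(t)=\left[\frac{t^n}{n!},\dots,\frac{t^2}{2!},t\right]^\top$, $\psi_n(t)=\left[t,\frac{t^2}{2!},\dots,\frac{t^n}{n!}\right]^\top\in\mathbb{R}^n$, let $P_n\in\mathbb{R}^{n\times n}$ be the anti-diagonal matrix whose $(i,n+1-i)$ entry is $(-1)^i$ ($i=1,\dots,n$) and all other entries zero, let $\Gamma_{n+1}^{2n}(t)\in\mathbb{R}^{n\times n}$ have $(i,j)$ entry $\frac{t^{\,n+1-i+j}}{(n+1-i+j)!}$, and set $\widehat\Gamma_{n+1}^{2n}(t)=\Gamma_{n+1}^{2n}(t)P_n$, $\widehat\psi_n(t)^H=\psi_n(t)^HP_n$. Then $$\kappa_n:=\widehat\psi_n(t)^H\big(\widehat\Gamma_{n+1}^{2n}(t)\big)^{-1}\phi_n(t)=\begin{cases}0,& n\text{ even},\\2,& n\text{ odd}.\end{cases}$$ *)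

theory Defs
  imports "Jordan_Normal_Form.Matrix"
begin

(* Indices are 0-based here; paper index i (1-based) corresponds to i-1. *)

definition phi_vec :: "nat \<Rightarrow> real \<Rightarrow> real vec" where
  "phi_vec n t = vec n (\<lambda>i. t ^ (n - i) / fact (n - i))"

definition psi_vec :: "nat \<Rightarrow> real \<Rightarrow> real vec" where
  "psi_vec n t = vec n (\<lambda>i. t ^ (i + 1) / fact (i + 1))"

definition P_mat :: "nat \<Rightarrow> real mat" where
  "P_mat n = mat n n (\<lambda>(i, j). if j = n - 1 - i then (-1) ^ (i + 1) else 0)"

definition Gamma_mat :: "nat \<Rightarrow> real \<Rightarrow> real mat" where
  "Gamma_mat n t = mat n n (\<lambda>(i, j). t ^ (n + 1 - i + j) / fact (n + 1 - i + j))"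

definition Gamma_hat :: "nat \<Rightarrow> real \<Rightarrow> real mat" where
  "Gamma_hat n t = Gamma_mat n t * P_mat n"

(* psi_hat^H = psi^H P_n, as a vector (real case: H = transpose) *)
definition psi_hat :: "nat \<Rightarrow> real \<Rightarrow> real vec" where
  "psi_hat n t = transpose_mat (P_mat n) *\<^sub>v psi_vec n t"

end

theory Submission imports Defs "HOL-Computational_Algebra.Polynomial" "Jordan_Normal_Form.Determinant"
begin

lemma hpm: "i \<le> k \<Longrightarrow> (pderiv ^^ i) (monom (c::real) k) = monom (c * fact k / fact (k - i)) (k - i)"
proof (induction i)
  case 0 thus ?case by simp
next
  case (Suc i)
  then have "(pderiv ^^ Suc i) (monom c k) = pderiv (monom (c * fact k / fact (k - i)) (k - i))" by simp
  also have "\<dots> = monom (of_nat (k-i) * (c * fact k / fact (k - i))) (k - Suc i)" by (simp add: pderiv_monom)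
  also have "of_nat (k-i) * (c * fact k / fact (k - i)) = c * fact k / fact (k - Suc i)"
  proof -
    have e: "k - i = Suc (k - Suc i)" using Suc.prems by simp
    have nz: "real (Suc (k - Suc i)) \<noteq> 0" by simp
    show ?thesis unfolding e fact_Suc of_nat_mult using nz by (simp del: of_nat_Suc)
  qed
  finally show ?case .
qed

lemma vanish_dvd: "(\<And>i. i < m \<Longrightarrow> poly ((pderiv ^^ i) p) a = 0) \<Longrightarrow> [:-a,1:]^m dvd (p::real poly)"
proof (induction m arbitrary: p)
  case 0 thus ?case by simp
next
  case (Suc m)
  have pa: "poly p a = 0" using Suc.prems[of 0] by simp
  have "[:-a,1:]^m dvd pderiv p"
  proof (rule Suc.IH)
    fix i assume "i < m"
    then have "poly ((pderiv^^Suc i) p) a = 0" using Suc.prems[of "Suc i"] by blast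
    thus "poly ((pderiv ^^ i) (pderiv p)) a = 0" by (simp only: funpow_Suc_right o_def)
  qed
  hence d: "pderiv p = 0 \<or> m \<le> order a (pderiv p)" by (simp add: order_divides)
  show ?case
  proof (cases "p = 0")
    case True thus ?thesis by simp
  next
    case False
    show ?thesis
    proof (cases "pderiv p = 0")
      case True
      then obtain h where "p = [:h:]" using pderiv_iszero by blast
      with pa False show ?thesis by simp
    next
      case F2: False
      have "order a p = Suc (order a (pderiv p))" using order_pderiv[OF False pa] .
      with d F2 have "Suc m \<le> order a p" by simp
      thus ?thesis by (simp only: order_divides) simp
    qed
  qed
qed

lemma leib: "poly ((pderiv ^^ k) (q * [:-a,1:]^k)) a = fact k * poly q (a::real)"
proof (induction k arbitrary: q)
  case 0 thus ?case by simp
next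
  case (Suc k)
  have e: "pderiv (q * [:-a,1:]^Suc k) = (pderiv q * [:-a,1:] + smult (of_nat (Suc k)) q) * [:-a,1:]^k"
  proof -
    have dl: "pderiv [:-a,1:] = 1" by (simp add: pderiv_pCons)
    have g: "r * [:-a,1:] + smult a r = pCons 0 r" for r :: "real poly"
      by (simp add: mult_pCons_right)
    have s1: "pderiv (q * [:-a,1:]^Suc k) = q * (smult (of_nat (Suc k)) ([:-a,1:]^k)) + [:-a,1:]^Suc k * pderiv q"
      by (simp only: pderiv_mult pderiv_power_Suc dl mult_1_right)
    have sm: "smult c r = [:c:] * r" for c r by simp
    have ring: "q*(C*Y) + (X*Y)*d = (d*X + C*q)*Y" for C X Y d :: "real poly"
      by (simp add: algebra_simps)
    show ?thesis by (subst s1, unfold sm power_Suc, rule ring)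
  qed
  have "(pderiv ^^ Suc k) (q * [:-a,1:]^Suc k) = (pderiv ^^ k) (pderiv (q * [:-a,1:]^Suc k))"
    by (simp add: funpow_Suc_right del: funpow.simps)
  also have "\<dots> = (pderiv ^^ k) ((pderiv q * [:-a,1:] + smult (of_nat (Suc k)) q) * [:-a,1:]^k)"
    using e by simp
  finally have "poly ((pderiv ^^ Suc k) (q * [:-a,1:]^Suc k)) a
     = fact k * poly (pderiv q * [:-a,1:] + smult (of_nat (Suc k)) q) a"
    using Suc.IH by presburger
  also have "\<dots> = fact (Suc k) * poly q a" by (simp add: algebra_simps del: of_nat_Suc)
  finally show ?case .
qed

lemma higher_pderiv_diff: "(pderiv ^^ n) (p - q) = (pderiv ^^ n) p - (pderiv ^^ n) (q::real poly)"
  by (induction n arbitrary: p q) (simp_all del: funpow.simps add: funpow_Suc_right pderiv_diff)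

lemma two_roots:
  fixes p :: "real poly"
  assumes "[:-a,1:]^m dvd p" "[:-b,1:]^k dvd p" "a \<noteq> b" "p \<noteq> 0"
  shows "[:-a,1:]^m * [:-b,1:]^k dvd p"
proof -
  obtain q where q: "p = [:-a,1:]^m * q" using assms(1) by blast
  have q0: "q \<noteq> 0" using q assms(4) by auto
  have "order b ([:-a,1:]^m) = 0"
    using order_root[of "[:-a,1:]^m" b] assms(3) by simp
  hence "order b p = order b q" using q order_mult[of "[:-a,1:]^m" q b] assms(4) by simp
  moreover have "k \<le> order b p" using assms(2,4) by (simp add: order_divides)
  ultimately have "[:-b,1:]^k dvd q" using q0 by (simp add: order_divides)
  thus ?thesis using q by simp
qed

definition gp :: "nat \<Rightarrow> real vec \<Rightarrow> real poly" where
  "gp n y = (\<Sum>j<n. monom (y$j / fact (n+1+j)) (n+1+j))"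

lemma gp_deriv: "i \<le> n+1 \<Longrightarrow> poly ((pderiv^^i) (gp n y)) t = (\<Sum>j<n. y$j * t^(n+1+j-i) / fact (n+1+j-i))"
  unfolding gp_def higher_pderiv_sum poly_sum
  by (rule sum.cong[OF refl], subst hpm, auto simp: poly_monom)

lemma Gamma_gp: "y \<in> carrier_vec n \<Longrightarrow> i < n \<Longrightarrow> (Gamma_mat n t *\<^sub>v y) $ i = poly ((pderiv^^i) (gp n y)) t"
  apply (subst gp_deriv, simp)
  apply (simp add: Gamma_mat_def mult_mat_vec_def scalar_prod_def lessThan_atLeast0)
  apply (rule sum.cong[OF refl])
  apply (subgoal_tac "n + 1 - i + x = Suc (n + x) - i")
  apply simp
  apply simp
  done

lemma psi_gp: "y \<in> carrier_vec n \<Longrightarrow> psi_vec n t \<bullet> y = poly ((pderiv^^n) (gp n y)) t"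
  apply (subst gp_deriv, simp)
  apply (simp add: psi_vec_def scalar_prod_def lessThan_atLeast0 mult_ac)
  done

lemma phi_m: "i \<le> n \<Longrightarrow> poly ((pderiv^^i) (monom (1 / fact n) n)) (t::real) = t^(n-i)/fact (n-i)"
  by (subst hpm, auto simp: poly_monom)

lemma coeff_gp: "coeff (gp n y) k = (if n < k \<and> k \<le> 2*n then y$(k-n-1) / fact k else 0)"
proof -
  have "coeff (gp n y) k = (\<Sum>j<n. if n+1+j = k then y$j / fact (n+1+j) else 0)"
    unfolding gp_def coeff_sum coeff_monom by (rule sum.cong) auto
  also have "\<dots> = (\<Sum>j<n. if j = k - n - 1 \<and> n < k then y$(k-n-1) / fact k else 0)"
    by (rule sum.cong) auto
  also have "\<dots> = (if n < k \<and> k \<le> 2*n then y$(k-n-1) / fact k else 0)"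
    by (cases "n < k") (auto simp: sum.delta)
  finally show ?thesis .
qed

lemma degree_gp: "Polynomial.degree (gp n y) \<le> 2*n"
  by (rule degree_le) (simp add: coeff_gp)

lemma gp_dvd: "monom 1 (n+1) dvd gp n y"
proof -
  have "gp n y = monom 1 (n+1) * (\<Sum>j<n. monom (y$j / fact (n+1+j)) j)"
    unfolding gp_def sum_distrib_left mult_monom by simp
  thus ?thesis by (metis dvd_triv_left)
qed

lemma monom_lin: "monom (1::real) k = [:-0,1:]^k"
  by (simp add: monom_altdef)

lemma prod_degree: "Polynomial.degree ([:-a,1:]^m * [:-b,1:]^k :: real poly) = m + k"
  by (subst degree_mult_eq) (auto simp: degree_linear_power)

lemma Gamma_ker:
  assumes t: "t \<noteq> 0" and y: "y \<in> carrier_vec n" and G: "Gamma_mat n t *\<^sub>v y = 0\<^sub>v n"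
  shows "y = 0\<^sub>v n"
proof -
  let ?p = "gp n y"
  have d1: "[:-t,1:]^n dvd ?p"
  proof (rule vanish_dvd)
    fix i assume i: "i < n"
    have "(Gamma_mat n t *\<^sub>v y) $ i = 0" using G i by simp
    thus "poly ((pderiv ^^ i) ?p) t = 0" using Gamma_gp[OF y i] by simp
  qed
  have d2: "[:-0,1:]^(n+1) dvd ?p" using gp_dvd[of n y] unfolding monom_lin .
  have p0: "?p = 0"
  proof (rule ccontr)
    assume nz: "?p \<noteq> 0"
    have "[:-t,1:]^n * [:-0,1:]^(n+1) dvd ?p" by (rule two_roots[OF d1 d2]) (use t nz in auto)
    from dvd_imp_degree_le[OF this nz] have "n + (n+1) \<le> Polynomial.degree ?p"
      by (simp only: prod_degree)
    with degree_gp[of n y] show False by simp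
  qed
  show ?thesis
  proof (rule eq_vecI)
    fix j assume j: "j < dim_vec (0\<^sub>v n :: real vec)"
    have "coeff ?p (n+1+j) = 0" using p0 by simp
    hence "y $ j / fact (n+1+j) = 0" using j by (simp add: coeff_gp)
    thus "y $ j = 0\<^sub>v n $ j" using j by simp
  qed (use y in simp)
qed

lemma kappa:
  assumes t: "t \<noteq> 0" and y: "y \<in> carrier_vec n" and G: "Gamma_mat n t *\<^sub>v y = phi_vec n t"
  shows "psi_vec n t \<bullet> y = 1 - (-1)^n"
proof -
  define p where "p = gp n y"
  define m where "m = monom (1 / fact n :: real) n"
  define h where "h = p - m"
  have d1: "[:-t,1:]^n dvd h"
  proof (rule vanish_dvd)
    fix i assume i: "i < n"
    have "poly ((pderiv ^^ i) h) t = (Gamma_mat n t *\<^sub>v y) $ i - t^(n-i)/fact (n-i)"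
      unfolding h_def higher_pderiv_diff poly_diff p_def m_def
      using Gamma_gp[OF y i] phi_m[of i n t] i by simp
    also have "\<dots> = 0" using G i by (simp add: phi_vec_def)
    finally show "poly ((pderiv ^^ i) h) t = 0" .
  qed
  have d2: "[:-0,1:]^n dvd h"
  proof -
    obtain r where r: "p = monom 1 (n+1) * r" using gp_dvd[of n y] unfolding p_def by blast
    have "h = monom 1 n * (monom 1 1 * r - [:1/fact n:])"
      unfolding h_def r m_def by (simp add: algebra_simps mult_monom monom_altdef)
    thus ?thesis unfolding monom_lin by (metis dvd_triv_left)
  qed
  have ch: "coeff h n = - 1 / fact n" unfolding h_def m_def p_def by (simp add: coeff_gp)
  hence hnz: "h \<noteq> 0" by auto
  have "[:-t,1:]^n * [:-0,1:]^n dvd h" by (rule two_roots[OF d1 d2]) (use t hnz in auto)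
  then obtain q where q: "h = [:-t,1:]^n * [:-0,1:]^n * q" by blast
  have qnz: "q \<noteq> 0" using q hnz by auto
  have degh: "Polynomial.degree h \<le> 2*n"
    unfolding h_def using degree_diff_le[of p "2*n" m] degree_gp[of n y]
    by (simp add: p_def m_def degree_monom_eq)
  have "Polynomial.degree h = n + n + Polynomial.degree q"
    unfolding q by (subst degree_mult_eq) (use qnz prod_degree[of t n 0 n] in simp_all)
  with degh have "Polynomial.degree q = 0" by simp
  then obtain c where qc: "q = [:c:]" using degree_0_id by metis
  have "coeff h n = coeff (monom 1 n * ([:-t,1:]^n * [:c:])) n"
    unfolding q qc monom_lin by (simp only: ac_simps)
  also have "\<dots> = poly ([:-t,1:]^n * [:c:]) 0" by (simp add: coeff_monom_mult poly_0_coeff_0)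
  also have "\<dots> = (-t)^n * c" by simp
  finally have c1: "(-t)^n * c = - 1 / fact n" using ch by simp
  have "poly ((pderiv ^^ n) h) t = poly ((pderiv ^^ n) (([:-0,1:]^n * [:c:]) * [:-t,1:]^n)) t"
    unfolding q qc by (simp only: ac_simps)
  also have "\<dots> = fact n * (t^n * c)" by (subst leib) simp
  finally have c2: "poly ((pderiv ^^ n) h) t = fact n * (t^n * c)" .
  have "poly ((pderiv ^^ n) h) t = psi_vec n t \<bullet> y - 1"
    unfolding h_def higher_pderiv_diff poly_diff p_def m_def
    using psi_gp[OF y, of t] phi_m[of n n t] by simp
  with c2 have "psi_vec n t \<bullet> y = 1 + fact n * (t^n * c)" by simp
  also have "t^n * c = (-1)^n * ((-t)^n * c)"
  proof -
    have "(-1)^n * (-t)^n = t^n" by (simp flip: power_mult_distrib)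
    thus ?thesis by (simp add: mult.assoc[symmetric])
  qed
  finally show ?thesis using c1 by simp
qed

lemma P_mult: "v \<in> carrier_vec n \<Longrightarrow> i < n \<Longrightarrow> (P_mat n *\<^sub>v v) $ i = (-1)^(i+1) * v $ (n-1-i)"
proof -
  assume v: "v \<in> carrier_vec n" and i: "i < n"
  have "(P_mat n *\<^sub>v v) $ i = (\<Sum>j\<in>{0..<n}. (if j = n - 1 - i then (-1)^(i+1) else 0) * v $ j)"
    using v i by (simp add: P_mat_def mult_mat_vec_def scalar_prod_def)
  also have "\<dots> = (\<Sum>j\<in>{0..<n}. if j = n - 1 - i then (-1)^(i+1) * v $ j else 0)"
    by (rule sum.cong) auto
  also have "\<dots> = (-1)^(i+1) * v $ (n-1-i)" using i by (simp add: sum.delta)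
  finally show ?thesis .
qed

lemma P_ker: "v \<in> carrier_vec n \<Longrightarrow> P_mat n *\<^sub>v v = 0\<^sub>v n \<Longrightarrow> v = (0\<^sub>v n :: real vec)"
proof (rule eq_vecI)
  assume v: "v \<in> carrier_vec n" and P: "P_mat n *\<^sub>v v = 0\<^sub>v n"
  fix j assume "j < dim_vec (0\<^sub>v n :: real vec)"
  hence j: "j < n" by simp
  have "(P_mat n *\<^sub>v v) $ (n-1-j) = 0" using P j by simp
  hence "(-1)^(n-1-j+1) * v $ (n-1-(n-1-j)) = (0::real)" using P_mult[OF v, of "n-1-j"] j by simp
  moreover have "n-1-(n-1-j) = j" using j by simp
  ultimately show "v $ j = 0\<^sub>v n $ j" using j by simp
qed (simp)

theorem theoremA3:
  fixes n :: nat and t :: real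
  assumes "t \<noteq> 0"
  shows "invertible_mat (Gamma_hat n t) \<and>
    (\<forall>B \<in> carrier_mat n n. Gamma_hat n t * B = 1\<^sub>m n \<and> B * Gamma_hat n t = 1\<^sub>m n \<longrightarrow>
       psi_hat n t \<bullet> (B *\<^sub>v phi_vec n t) = (if even n then 0 else 2))"
proof -
  have Gc: "Gamma_mat n t \<in> carrier_mat n n" by (simp add: Gamma_mat_def)
  have Pc: "P_mat n \<in> carrier_mat n n" by (simp add: P_mat_def)
  have Ghc: "Gamma_hat n t \<in> carrier_mat n n" using Gc Pc by (simp add: Gamma_hat_def)
  have det: "det (Gamma_hat n t) \<noteq> 0"
    unfolding det_0_iff_vec_prod_zero[OF Ghc]
  proof clarify
    fix v :: "real vec" assume v: "v \<in> carrier_vec n" and nz: "v \<noteq> 0\<^sub>v n"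
      and e: "Gamma_hat n t *\<^sub>v v = 0\<^sub>v n"
    have "Gamma_mat n t *\<^sub>v (P_mat n *\<^sub>v v) = 0\<^sub>v n"
      using e unfolding Gamma_hat_def using assoc_mult_mat_vec[OF Gc Pc v] by simp
    hence "P_mat n *\<^sub>v v = 0\<^sub>v n" using Gamma_ker[OF assms] Pc v by auto
    hence "v = 0\<^sub>v n" using P_ker v by blast
    with nz show False by simp
  qed
  from det_non_zero_imp_unit[OF Ghc det, of "()"]
  obtain B where B: "B \<in> carrier_mat n n" "B * Gamma_hat n t = 1\<^sub>m n" "Gamma_hat n t * B = 1\<^sub>m n"
    unfolding Units_def by (auto simp: ring_mat_simps)
  have inv: "invertible_mat (Gamma_hat n t)"
    unfolding invertible_mat_def inverts_mat_def using B Ghc by auto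
  have main: "psi_hat n t \<bullet> (B *\<^sub>v phi_vec n t) = (if even n then 0 else 2)"
    if Bc: "B \<in> carrier_mat n n" and GB: "Gamma_hat n t * B = 1\<^sub>m n" for B
  proof -
    have phc: "phi_vec n t \<in> carrier_vec n" by (simp add: phi_vec_def)
    have psc: "psi_vec n t \<in> carrier_vec n" by (simp add: psi_vec_def)
    define y where "y = P_mat n *\<^sub>v (B *\<^sub>v phi_vec n t)"
    have yc: "y \<in> carrier_vec n" unfolding y_def using Pc Bc phc by simp
    have "Gamma_mat n t *\<^sub>v y = (Gamma_mat n t * P_mat n) *\<^sub>v (B *\<^sub>v phi_vec n t)"
      unfolding y_def by (rule assoc_mult_mat_vec[symmetric, OF Gc Pc]) (use Bc phc in simp)
    also have "\<dots> = ((Gamma_mat n t * P_mat n) * B) *\<^sub>v phi_vec n t"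
      by (rule assoc_mult_mat_vec[symmetric]) (use Gc Pc Bc phc in auto)
    also have "\<dots> = phi_vec n t" using GB phc unfolding Gamma_hat_def by simp
    finally have Gy: "Gamma_mat n t *\<^sub>v y = phi_vec n t" .
    have "psi_hat n t \<bullet> (B *\<^sub>v phi_vec n t) = psi_vec n t \<bullet> y"
      unfolding psi_hat_def y_def
      by (rule transpose_vec_mult_scalar[OF Pc _ psc]) (use Bc phc in simp)
    also have "\<dots> = 1 - (-1)^n" by (rule kappa[OF assms yc Gy])
    finally show ?thesis by simp
  qed
  show ?thesis using inv main by blast
qed

end
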